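(* Let $\bm M\in\mathcal{B}(N,r)$. Then there exist an integer $r'$ with $r\le r'\le rN$ and $\bm U\in\mathbb{R}^{r'\times rN}$ with $\bm M = \bm U^\top\bm U$ of the block form $$\bm U = \begin{bmatrix} \bm S_1 & \bm S_2 & \cdots & \bm S_N \\ \bm R_1 & \bm R_2 & \cdots & \bm R_N\end{bmatrix},$$ where $\bm S_i\in\mathbb{R}^{r\times r}$ are symmetric, $\bm S_1 = \bm I_r$, $\bm R_i\in\mathbb{R}^{(r'-r)\times r}$, $\bm R_1 = \bm 0$, and for all $i,j\in[N]$, $$\bm S_i^2 + \bm R_i^\top\bm R_i = \bm I_r,\qquad \bm S_i\bm S_j - \bm S_j\bm S_i + \bm R_i^\top\bm R_j - \bm R_j^\top\bm R_i = \bm 0.$$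
   Context: A matrix $\bm M \in \mathbb{R}^{rN\times rN}$ is viewed as an $N\times N$ array of $r\times r$ blocks, $\bm M_{[ij]}$ denoting block $(i,j)$. $\mathcal{B}(N,r)$ is the set of symmetric $\bm M \in \mathbb{R}^{rN\times rN}$ with $\bm M \succeq 0$, $\bm M_{[ii]} = \bm I_r$ for all $i$, and $\bm M_{[ij]} = \bm M_{[ij]}^\top$ for all $i,j$. *)

theory Defs
  imports "Jordan_Normal_Form.Matrix"
begin

definition psd_mat :: "real mat \<Rightarrow> bool" where
  "psd_mat M \<longleftrightarrow> M \<in> carrier_mat (dim_row M) (dim_row M) \<and>
     (\<forall>x \<in> carrier_vec (dim_row M). 0 \<le> x \<bullet> (M *\<^sub>v x))"

definition blk :: "nat \<Rightarrow> 'a mat \<Rightarrow> nat \<Rightarrow> nat \<Rightarrow> 'a mat" where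
  "blk r M i j = mat r r (\<lambda>(a,b). M $$ (r*i + a, r*j + b))"

definition Bset :: "nat \<Rightarrow> nat \<Rightarrow> real mat set" where
  "Bset N r = {M. M \<in> carrier_mat (r*N) (r*N) \<and> M = transpose_mat M \<and> psd_mat M \<and>
     (\<forall>i<N. blk r M i i = 1\<^sub>m r) \<and>
     (\<forall>i<N. \<forall>j<N. blk r M i j = transpose_mat (blk r M i j))}"

text \<open>Sub-blocks of U: S_i = rows 0..r-1, columns r*i..r*i+r-1;
  R_i = rows r..r'-1, same columns (0-based i).\<close>
definition Sblk :: "nat \<Rightarrow> 'a mat \<Rightarrow> nat \<Rightarrow> 'a mat" where
  "Sblk r U i = mat r r (\<lambda>(a,b). U $$ (a, r*i + b))"

definition Rblk :: "nat \<Rightarrow> 'a mat \<Rightarrow> nat \<Rightarrow> 'a mat" where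
  "Rblk r U i = mat (dim_row U - r) r (\<lambda>(a,b). U $$ (r + a, r*i + b))"

end

theory Submission imports Defs begin

definition Q :: "(nat \<Rightarrow> nat \<Rightarrow> real) \<Rightarrow> nat \<Rightarrow> (nat \<Rightarrow> real) \<Rightarrow> real" where
  "Q M n x = (\<Sum>i<n. \<Sum>j<n. x i * M i j * x j)"

lemma Q_zero: "Q M n (\<lambda>_. 0) = 0" by (simp add: Q_def)

lemma quad_add:
  assumes sym: "\<And>i j. M i j = M j i" and k: "k < n"
  shows "Q M n (\<lambda>i. x i + (if i = k then c else 0)) =
         Q M n x + 2*c*(\<Sum>j<n. M k j * x j) + c^2 * M k k"
proof -
  have e: "\<And>i j. (x i + (if i = k then c else 0)) * M i j * (x j + (if j = k then c else 0))
     = x i * M i j * x j + (if i = k then c * M k j * x j else 0)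
       + (if j = k then c * M j i * x i else 0) + (if i = k then (if j = k then c^2 * M k k else 0) else 0)"
    by (auto simp: algebra_simps power2_eq_square sym)
  have "Q M n (\<lambda>i. x i + (if i = k then c else 0)) =
     (\<Sum>i<n. \<Sum>j<n. x i * M i j * x j) + (\<Sum>i<n. \<Sum>j<n. (if i = k then c * M k j * x j else 0))
     + (\<Sum>i<n. \<Sum>j<n. (if j = k then c * M j i * x i else 0))
     + (\<Sum>i<n. \<Sum>j<n. (if i = k then (if j = k then c^2 * M k k else 0) else 0))"
    unfolding Q_def e by (simp add: sum.distrib)
  also have "\<dots> = Q M n x + c*(\<Sum>j<n. M k j * x j) + c*(\<Sum>j<n. M k j * x j) + c^2 * M k k"
  proof -
    have 1: "(\<Sum>i<n. \<Sum>j<n. (if i = k then c * M k j * x j else 0)) = c*(\<Sum>j<n. M k j * x j)"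
    proof -
      have "\<And>i. (\<Sum>j<n. (if i = k then c * M k j * x j else 0)) = (if i = k then (\<Sum>j<n. c * M k j * x j) else 0)"
        by simp
      then show ?thesis using k by (simp add: sum_distrib_left mult.assoc)
    qed
    have 2: "(\<Sum>i<n. \<Sum>j<n. (if j = k then c * M j i * x i else 0)) = c*(\<Sum>j<n. M k j * x j)"
      using k by (simp add: sum_distrib_left mult.assoc)
    have 3: "(\<Sum>i<n. \<Sum>j<n. (if i = k then (if j = k then c^2 * M k k else 0) else 0)) = c^2 * M k k"
    proof -
      have "\<And>i. (\<Sum>j<n. (if i = k then (if j = k then c^2 * M k k else 0) else 0)) = (if i = k then c^2 * M k k else 0)"
        using k by simp
      then show ?thesis using k by simp
    qed
    show ?thesis using 1 2 3 by (simp add: Q_def)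
  qed
  finally show ?thesis by simp
qed

lemma Q_sub: "Q (\<lambda>i j. M i j - v i * v j) n x = Q M n x - (\<Sum>i<n. v i * x i)^2"
proof -
  have "(\<Sum>i<n. v i * x i)^2 = (\<Sum>i<n. \<Sum>j<n. x i * (v i * v j) * x j)"
    by (simp add: power2_eq_square sum_product algebra_simps)
  then show ?thesis unfolding Q_def by (simp add: algebra_simps sum_subtractf)
qed

lemma chol:
  fixes M :: "nat \<Rightarrow> nat \<Rightarrow> real"
  assumes "n - k = m" "k \<le> n" "r \<le> n"
   and "\<And>i j. M i j = M j i"
   and "\<And>x. 0 \<le> Q M n x"
   and "\<And>i j. i < k \<or> j < k \<or> n \<le> i \<or> n \<le> j \<Longrightarrow> M i j = 0"
   and "\<And>i j. k \<le> i \<Longrightarrow> i < r \<Longrightarrow> j < r \<Longrightarrow> M i j = (if i = j then 1 else 0)"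
  shows "\<exists>L. (\<forall>i j. M i j = (\<Sum>t<n. L i t * L j t)) \<and>
    (\<forall>i t. (i < t \<or> i < k \<or> t < k \<or> n \<le> i) \<longrightarrow> L i t = 0) \<and>
    (\<forall>i t. k \<le> i \<longrightarrow> i < r \<longrightarrow> t < n \<longrightarrow> L i t = (if i = t then 1 else 0))"
  using assms
proof (induction m arbitrary: k M)
  case 0
  then have kn: "k = n" by simp
  have "M i j = 0" for i j using 0(6)[of i j] kn by linarith
  then show ?case
    by (intro exI[of _ "\<lambda>_ _. 0"]) (use 0 kn in auto)
next
  case (Suc m)
  note sym = Suc.prems(4) and psd = Suc.prems(5) and supp = Suc.prems(6) and idb = Suc.prems(7)
  have kn: "k < n" using Suc.prems(1) by simp
  have m: "n - Suc k = m" using Suc.prems(1) by simp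
  define d where "d = M k k"
  have Qe: "\<And>x c. Q M n (\<lambda>i. x i + (if i = k then c else 0)) =
         Q M n x + 2*c*(\<Sum>j<n. M k j * x j) + c^2 * d"
    unfolding d_def by (rule quad_add[OF sym kn])
  have "0 \<le> Q M n (\<lambda>i. 0 + (if i = k then 1 else 0))" by (rule psd)
  then have d0: "0 \<le> d" unfolding Qe by (simp add: Q_zero)
  show ?case
  proof (cases "d = 0")
    case True
    have row0: "M k j = 0" for j
    proof (cases "j < n")
      case False then show ?thesis using supp by auto
    next
      case jn: True
      show ?thesis
      proof (rule ccontr)
        assume b: "M k j \<noteq> 0"
        then have jk: "j \<noteq> k" using True d_def by auto
        define x where "x = (\<lambda>i. (0::real) + (if i = j then 1 else 0))"
        have Qx: "Q M n x = M j j"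
          unfolding x_def by (subst quad_add[OF sym jn]) (simp add: Q_zero)
        have sx: "(\<Sum>t<n. M k t * x t) = M k j"
          unfolding x_def using jn by (simp add: if_distrib cong: if_cong)
        define c where "c = - (M j j + 1) / (2 * M k j)"
        have "0 \<le> Q M n (\<lambda>i. x i + (if i = k then c else 0))" by (rule psd)
        also have "\<dots> = M j j + 2 * c * M k j" unfolding Qe Qx sx using True by simp
        also have "\<dots> = -1" unfolding c_def using b by (simp add: field_simps)
        finally show False by simp
      qed
    qed
    have "\<exists>L. (\<forall>i j. M i j = (\<Sum>t<n. L i t * L j t)) \<and>
      (\<forall>i t. (i < t \<or> i < Suc k \<or> t < Suc k \<or> n \<le> i) \<longrightarrow> L i t = 0) \<and>
      (\<forall>i t. Suc k \<le> i \<longrightarrow> i < r \<longrightarrow> t < n \<longrightarrow> L i t = (if i = t then 1 else 0))"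
    proof (rule Suc.IH[OF m _ Suc.prems(3) sym psd])
      show "Suc k \<le> n" using kn by simp
      show "M i j = 0" if "i < Suc k \<or> j < Suc k \<or> n \<le> i \<or> n \<le> j" for i j
        using that supp row0 sym by (metis less_Suc_eq)
      show "M i j = (if i = j then 1 else 0)" if "Suc k \<le> i" "i < r" "j < r" for i j
        using that idb by simp
    qed
    then obtain L where L: "\<forall>i j. M i j = (\<Sum>t<n. L i t * L j t)"
      "\<forall>i t. (i < t \<or> i < Suc k \<or> t < Suc k \<or> n \<le> i) \<longrightarrow> L i t = 0"
      "\<forall>i t. Suc k \<le> i \<longrightarrow> i < r \<longrightarrow> t < n \<longrightarrow> L i t = (if i = t then 1 else 0)" by blast
    have kr: "\<not> k < r" using idb[of k k] True d_def by auto
    show ?thesis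
    proof (rule exI[of _ L], intro conjI allI impI)
      show "M i j = (\<Sum>t<n. L i t * L j t)" for i j using L(1) by blast
      show "L i t = 0" if "i < t \<or> i < k \<or> t < k \<or> n \<le> i" for i t using that L(2) by auto
      show "L i t = (if i = t then 1 else 0)" if "k \<le> i" "i < r" "t < n" for i t
        using that L(3) kr by (metis le_eq_less_or_eq less_eq_Suc_le)
    qed
  next
    case False
    with d0 have dp: "0 < d" by simp
    define s where "s = sqrt d"
    have sp: "0 < s" "s * s = d" using dp unfolding s_def by (auto simp: real_sqrt_mult_self)
    define v where "v = (\<lambda>i. M i k / s)"
    define M' where "M' = (\<lambda>i j. M i j - v i * v j)"
    have psd': "0 \<le> Q M' n x" for x
    proof -
      define S where "S = (\<Sum>j<n. M k j * x j)"
      have vx: "(\<Sum>i<n. v i * x i) = S / s"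
        unfolding v_def S_def by (simp add: sum_divide_distrib sym[of _ k])
      have "0 \<le> Q M n (\<lambda>i. x i + (if i = k then - S / d else 0))" by (rule psd)
      also have "\<dots> = Q M n x - S^2 / d"
        unfolding Qe S_def[symmetric] using dp by (simp add: field_simps power2_eq_square)
      also have "\<dots> = Q M' n x"
        unfolding M'_def Q_sub vx using sp by (simp add: power_divide power2_eq_square)
      finally show ?thesis .
    qed
    have vk: "v k = s" unfolding v_def d_def[symmetric] using sp by (simp add: field_simps)
    have vz: "v i = 0" if "i < k \<or> n \<le> i" for i unfolding v_def using supp that by auto
    have "\<exists>L. (\<forall>i j. M' i j = (\<Sum>t<n. L i t * L j t)) \<and>
      (\<forall>i t. (i < t \<or> i < Suc k \<or> t < Suc k \<or> n \<le> i) \<longrightarrow> L i t = 0) \<and>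
      (\<forall>i t. Suc k \<le> i \<longrightarrow> i < r \<longrightarrow> t < n \<longrightarrow> L i t = (if i = t then 1 else 0))"
    proof (rule Suc.IH[OF m _ Suc.prems(3)])
      show "Suc k \<le> n" using kn by simp
      show "M' i j = M' j i" for i j unfolding M'_def using sym[of i j] by (simp add: mult.commute)
      show "0 \<le> Q M' n x" for x by (rule psd')
      show "M' i j = 0" if "i < Suc k \<or> j < Suc k \<or> n \<le> i \<or> n \<le> j" for i j
      proof -
        have "i < k \<or> j < k \<or> n \<le> i \<or> n \<le> j \<or> i = k \<or> j = k" using that by linarith
        then consider "i < k \<or> j < k \<or> n \<le> i \<or> n \<le> j" | "i = k" | "j = k" by blast
        then show ?thesis
        proof cases
          case 1
          have a: "M i j = 0" using 1 supp by blast
          have "v i = 0 \<or> v j = 0" using 1 vz[of i] vz[of j] by blast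
          then have b: "v i * v j = 0" by auto
          show ?thesis unfolding M'_def using a b by simp
        next
          case 2
          have "v j = M j k / s" by (simp add: v_def)
          then have "v k * v j = M j k" using vk sp(1) by simp
          then show ?thesis unfolding M'_def using 2 sym[of j k] by simp
        next
          case 3
          have "v i = M i k / s" by (simp add: v_def)
          then have "v i * v k = M i k" using vk sp(1) by simp
          then show ?thesis unfolding M'_def using 3 by simp
        qed
      qed
      show "M' i j = (if i = j then 1 else 0)" if "Suc k \<le> i" "i < r" "j < r" for i j
      proof -
        have "M i k = 0" using that idb[of i k] by (cases "k < r") auto
        then show ?thesis unfolding M'_def v_def using that idb[of i j] by simp
      qed
    qed
    then obtain L where L: "\<forall>i j. M' i j = (\<Sum>t<n. L i t * L j t)"
      "\<forall>i t. (i < t \<or> i < Suc k \<or> t < Suc k \<or> n \<le> i) \<longrightarrow> L i t = 0"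
      "\<forall>i t. Suc k \<le> i \<longrightarrow> i < r \<longrightarrow> t < n \<longrightarrow> L i t = (if i = t then 1 else 0)" by blast
    define L2 where "L2 = (\<lambda>i t. if t = k then v i else L i t)"
    show ?thesis
    proof (rule exI[of _ L2], intro conjI allI impI)
      fix i j
      have "(\<Sum>t<n. L2 i t * L2 j t) = (\<Sum>t<n. L i t * L j t + (if t = k then v i * v j else 0))"
        unfolding L2_def using L(2) by (intro sum.cong) auto
      also have "\<dots> = M' i j + v i * v j" using L(1) kn by (simp add: sum.distrib)
      finally show "M i j = (\<Sum>t<n. L2 i t * L2 j t)" unfolding M'_def by simp
    next
      fix i t assume "i < t \<or> i < k \<or> t < k \<or> n \<le> i"
      then show "L2 i t = 0" unfolding L2_def using L(2) vz by auto
    next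
      fix i t assume it: "k \<le> i" "i < r" "t < n"
      show "L2 i t = (if i = t then 1 else 0)"
      proof (cases "i = k")
        case True
        then have d1: "d = 1" using idb[of k k] it d_def by simp
        then have s1: "s = 1" using s_def by simp
        show ?thesis
          using True L(2) vk s1 by (auto simp: L2_def)
      next
        case False
        then have "M i k = 0" using it idb[of i k] by (cases "k < r") auto
        then show ?thesis using False it L(3) unfolding L2_def v_def by auto
      qed
    qed
  qed
qed

lemma sum_split_nat: "(\<Sum>c<r+(m::nat). f c) = (\<Sum>c<r. f c) + (\<Sum>c<m. (f (r+c)::real))"
  by (induction m) auto

lemma lt_blk: "i < N \<Longrightarrow> a < r \<Longrightarrow> r*i + a < r*(N::nat)"
proof -
  assume "i < N" "a < r"
  then have "r*i + a < r*i + r" by simp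
  also have "\<dots> = r*(i+1)" by simp
  also have "\<dots> \<le> r*N" using \<open>i<N\<close> by (intro mult_le_mono2) simp
  finally show ?thesis .
qed

theorem proposition8:
  fixes N r :: nat and M :: "real mat"
  assumes "0 < N"
    and "M \<in> Bset N r"
  shows "\<exists>r' (U :: real mat).
     r \<le> r' \<and> r' \<le> r * N \<and> U \<in> carrier_mat r' (r * N) \<and>
     M = transpose_mat U * U \<and>
     (\<forall>i<N. Sblk r U i = transpose_mat (Sblk r U i)) \<and>
     Sblk r U 0 = 1\<^sub>m r \<and>
     Rblk r U 0 = 0\<^sub>m (r' - r) r \<and>
     (\<forall>i<N. \<forall>j<N.
        Sblk r U i * Sblk r U i + transpose_mat (Rblk r U i) * Rblk r U i = 1\<^sub>m r \<and>
        Sblk r U i * Sblk r U j - Sblk r U j * Sblk r U i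
          + transpose_mat (Rblk r U i) * Rblk r U j
          - transpose_mat (Rblk r U j) * Rblk r U i = 0\<^sub>m r r)"
proof -
  define n where "n = r * N"
  have rn: "r \<le> n" unfolding n_def using assms(1) by simp
  have Mc: "M \<in> carrier_mat n n" and Mt: "M = transpose_mat M" and Mp: "psd_mat M"
    and Md: "\<And>i. i < N \<Longrightarrow> blk r M i i = 1\<^sub>m r"
    and Ms: "\<And>i j. i < N \<Longrightarrow> j < N \<Longrightarrow> blk r M i j = transpose_mat (blk r M i j)"
    using assms(2) unfolding Bset_def n_def by auto
  have Msym: "M $$ (i,j) = M $$ (j,i)" if "i < n" "j < n" for i j
  proof -
    have "M $$ (i,j) = transpose_mat M $$ (i,j)" using Mt by simp
    also have "\<dots> = M $$ (j,i)" using that Mc by simp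
    finally show ?thesis .
  qed
  define Mf where "Mf = (\<lambda>i j. if i < n \<and> j < n then M $$ (i,j) else 0)"
  have psdf: "0 \<le> Q Mf n x" for x
  proof -
    have "vec n x \<in> carrier_vec (dim_row M)" using Mc by simp
    then have "0 \<le> vec n x \<bullet> (M *\<^sub>v vec n x)" using Mp unfolding psd_mat_def by blast
    also have "vec n x \<bullet> (M *\<^sub>v vec n x) = Q Mf n x"
      using Mc unfolding Q_def Mf_def
      by (simp add: scalar_prod_def atLeast0LessThan sum_distrib_left mult.assoc mult.left_commute)
    finally show ?thesis .
  qed
  have "\<exists>L. (\<forall>i j. Mf i j = (\<Sum>t<n. L i t * L j t)) \<and>
    (\<forall>i t. (i < t \<or> i < 0 \<or> t < 0 \<or> n \<le> i) \<longrightarrow> L i t = 0) \<and>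
    (\<forall>i t. 0 \<le> i \<longrightarrow> i < r \<longrightarrow> t < n \<longrightarrow> L i t = (if i = t then 1 else 0))"
  proof (rule chol[OF refl _ rn])
    show "0 \<le> n" by simp
    show "Mf i j = Mf j i" for i j unfolding Mf_def using Msym by auto
    show "0 \<le> Q Mf n x" for x by (rule psdf)
    show "Mf i j = 0" if "i < 0 \<or> j < 0 \<or> n \<le> i \<or> n \<le> j" for i j
      using that unfolding Mf_def by auto
    show "Mf i j = (if i = j then 1 else 0)" if "0 \<le> i" "i < r" "j < r" for i j
    proof -
      have "blk r M 0 0 $$ (i,j) = 1\<^sub>m r $$ (i,j)" using Md[of 0] assms(1) by simp
      then show ?thesis using that rn unfolding Mf_def blk_def by auto
    qed
  qed
  then obtain L where L1: "\<And>i j. Mf i j = (\<Sum>t<n. L i t * L j t)"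
    and L2: "\<And>i t. i < t \<Longrightarrow> L i t = 0"
    and L3: "\<And>i t. i < r \<Longrightarrow> t < n \<Longrightarrow> L i t = (if i = t then 1 else 0)" by blast
  have LM: "M $$ (i,j) = (\<Sum>t<n. L i t * L j t)" if "i < n" "j < n" for i j
    using L1[of i j] that unfolding Mf_def by simp
  define U where "U = mat n n (\<lambda>(a,b). L b a)"
  have Uc: "U \<in> carrier_mat n (r*N)" unfolding U_def n_def by simp
  have MU: "M = transpose_mat U * U"
    by (rule eq_matI) (use Mc in \<open>auto simp: U_def LM scalar_prod_def atLeast0LessThan\<close>)
  have S0: "Sblk r U 0 = 1\<^sub>m r"
    by (rule eq_matI) (use rn L3 in \<open>auto simp: Sblk_def U_def\<close>)
  have R0: "Rblk r U 0 = 0\<^sub>m (n - r) r"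
    by (rule eq_matI) (use rn L3 in \<open>auto simp: Rblk_def U_def\<close>)
  have SM: "Sblk r U i = blk r M 0 i" if "i < N" for i
  proof (rule eq_matI)
    fix a b assume ab: "a < dim_row (blk r M 0 i)" "b < dim_col (blk r M 0 i)"
    then have ab': "a < r" "b < r" by (auto simp: blk_def)
    have lt: "r*i + b < n" unfolding n_def using lt_blk that ab' by blast
    have "blk r M 0 i $$ (a,b) = M $$ (a, r*i+b)" using ab' by (simp add: blk_def)
    also have "\<dots> = (\<Sum>t<n. L a t * L (r*i+b) t)" using LM lt ab' rn by simp
    also have "\<dots> = (\<Sum>t<n. if t = a then L (r*i+b) t else 0)"
      by (rule sum.cong) (use L3 ab' in auto)
    also have "\<dots> = L (r*i+b) a" using ab' rn by simp
    finally show "Sblk r U i $$ (a,b) = blk r M 0 i $$ (a,b)"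
      using ab' lt rn by (simp add: Sblk_def U_def)
  qed (auto simp: Sblk_def blk_def)
  have Ssym: "Sblk r U i = transpose_mat (Sblk r U i)" if "i < N" for i
    using SM[OF that] Ms[OF assms(1) that] by simp
  have blkeq: "transpose_mat (Sblk r U i) * Sblk r U j + transpose_mat (Rblk r U i) * Rblk r U j
      = blk r M i j" if "i < N" "j < N" for i j
  proof (rule eq_matI)
    fix a b assume ab: "a < dim_row (blk r M i j)" "b < dim_col (blk r M i j)"
    then have ab': "a < r" "b < r" by (auto simp: blk_def)
    have lt: "r*i + a < n" "r*j + b < n" unfolding n_def using lt_blk that ab' by blast+
    have nr: "n = r + (n - r)" using rn by simp
    have "(\<Sum>c<n. L (r*i+a) c * L (r*j+b) c) = 
       (\<Sum>c<r. L (r*i+a) c * L (r*j+b) c) + (\<Sum>c<n-r. L (r*i+a) (r+c) * L (r*j+b) (r+c))"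
      by (subst nr, subst sum_split_nat) simp
    then show "(transpose_mat (Sblk r U i) * Sblk r U j + transpose_mat (Rblk r U i) * Rblk r U j) $$ (a,b)
       = blk r M i j $$ (a,b)"
      using ab' lt rn LM[OF lt]
      by (simp add: Sblk_def Rblk_def U_def blk_def scalar_prod_def atLeast0LessThan)
  qed (auto simp: Sblk_def Rblk_def blk_def U_def)
  have blksw: "blk r M j i = blk r M i j" if "i < N" "j < N" for i j
  proof -
    have "blk r M j i = transpose_mat (blk r M i j)"
    proof (rule eq_matI)
      fix a b assume ab: "a < dim_row (transpose_mat (blk r M i j))" "b < dim_col (transpose_mat (blk r M i j))"
      then have ab': "a < r" "b < r" by (auto simp: blk_def)
      have lt: "r*i + b < n" "r*j + a < n" unfolding n_def using lt_blk that ab' by blast+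
      show "blk r M j i $$ (a,b) = transpose_mat (blk r M i j) $$ (a,b)"
        using ab' Msym[OF lt(2) lt(1)] by (simp add: blk_def)
    qed (auto simp: blk_def)
    then show ?thesis using Ms[OF that] by simp
  qed
  show ?thesis
  proof (intro exI conjI allI impI)
    show "r \<le> n" by (rule rn)
    show "n \<le> r * N" by (simp add: n_def)
    show "U \<in> carrier_mat n (r * N)" by (rule Uc)
    show "M = transpose_mat U * U" by (rule MU)
    show "Sblk r U i = transpose_mat (Sblk r U i)" if "i < N" for i using Ssym[OF that] .
    show "Sblk r U 0 = 1\<^sub>m r" by (rule S0)
    show "Rblk r U 0 = 0\<^sub>m (n - r) r" by (rule R0)
    fix i j assume ij: "i < N" "j < N"
    show "Sblk r U i * Sblk r U i + transpose_mat (Rblk r U i) * Rblk r U i = 1\<^sub>m r"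
      using blkeq[OF ij(1) ij(1)] Ssym[OF ij(1)] Md[OF ij(1)] by metis
    have e1: "Sblk r U i * Sblk r U j + transpose_mat (Rblk r U i) * Rblk r U j = blk r M i j"
      using blkeq[OF ij] Ssym[OF ij(1)] by metis
    have e2: "Sblk r U j * Sblk r U i + transpose_mat (Rblk r U j) * Rblk r U i = blk r M i j"
      using blkeq[OF ij(2) ij(1)] Ssym[OF ij(2)] blksw[OF ij] by metis
    show "Sblk r U i * Sblk r U j - Sblk r U j * Sblk r U i
          + transpose_mat (Rblk r U i) * Rblk r U j
          - transpose_mat (Rblk r U j) * Rblk r U i = 0\<^sub>m r r"
    proof (rule eq_matI)
      fix a b assume "a < dim_row (0\<^sub>m r r :: real mat)" "b < dim_col (0\<^sub>m r r :: real mat)"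
      then have ab: "a < r" "b < r" by auto
      have x1: "(Sblk r U i * Sblk r U j) $$ (a,b) + (transpose_mat (Rblk r U i) * Rblk r U j) $$ (a,b) = blk r M i j $$ (a,b)"
        using arg_cong[OF e1, of "\<lambda>X. X $$ (a,b)"] ab by (simp add: Sblk_def Rblk_def)
      have x2: "(Sblk r U j * Sblk r U i) $$ (a,b) + (transpose_mat (Rblk r U j) * Rblk r U i) $$ (a,b) = blk r M i j $$ (a,b)"
        using arg_cong[OF e2, of "\<lambda>X. X $$ (a,b)"] ab by (simp add: Sblk_def Rblk_def)
      show "(Sblk r U i * Sblk r U j - Sblk r U j * Sblk r U i
          + transpose_mat (Rblk r U i) * Rblk r U j
          - transpose_mat (Rblk r U j) * Rblk r U i) $$ (a,b) = 0\<^sub>m r r $$ (a,b)"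
        using x1 x2 ab by (simp add: Sblk_def Rblk_def)
    qed (auto simp: Sblk_def Rblk_def)
  qed
qed

end
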